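(* In the setting described in the context, let $n\ge3$ and let $M=\{(0,\dots,0,u):u\in\mathsf k\}\subseteq U$. Assume that for every $\upsilon=(0,\dots,0,u)\in M$ with $u\ne0$, the centralizer of $\upsilon U_{n-3}$ in $U_{n-1}/U_{n-3}$ equals $U_{n-2}/U_{n-3}$. Then (up to a constant factor $c\in\mathsf k^*$ in the added term, which can be normalized to $1$ by rescaling a coordinate) the automorphism of $U_{n-1}/U_{n-3}$ induced by conjugation by $\upsilon=(0,\dots,0,u)$ maps $(\dots,x_{n-2},x_{n-1},0)U_{n-3}\mapsto(\dots,x_{n-2}+u^hx_{n-1}^k,x_{n-1},0)U_{n-3}$, where $h,k$ are powers of $p$ if $\mathrm{char}\,\mathsf k=p>0$, and $h=k=1$ otherwise.
   Context: Let $\mathsf k$ be an algebraically closed field and $G=U\rtimes T$ the semidirect product of an $n$-dimensional connected unipotent algebraic group $U$ by a $1$-dimensional connected torus $T$. Assume $U$ is identified with the affine space $\mathsf k^n$ so that: the subsets $U_i=\{(x_1,\dots,x_n): x_{i+1}=\dots=x_n=0\}$ ($0\le i\le n$) are normal subgroups of $G$; the product is $(x_1,\dots,x_n)(y_1,\dots,y_n)=(x_1+y_1+\psi_1,\ \dots,\ x_{n-1}+y_{n-1}+\psi_{n-1},\ x_n+y_n)$ where $\psi_j\in\mathsf k[x_{j+1},\dots,x_n,y_{j+1},\dots,y_n]$; and each $\tau\in T$ acts on $U$ by the automorphism $(x_1,\dots,x_n)\mapsto(a_\tau^{e_1}x_1+\varphi_1^{(\tau)}(x_2,\dots,x_n),\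 \dots,\ a_\tau^{e_{n-1}}x_{n-1}+\varphi^{(\tau)}_{n-1}(x_n),\ a_\tau^{e_n}x_n)$, where $a_\tau\in\mathsf k^*$ depends bi-regularly on $\tau$, each $\varphi^{(\tau)}_j$ is a morphism, and the $e_j$ are fixed integers. *)

theory Defs
  imports "HOL-Algebra.Group" "HOL-Algebra.Coset" "HOL-Computational_Algebra.Polynomial"
begin

text \<open>Polynomial functions in the variables from V with coefficients in 'a
  (the image of the polynomial ring 'a[V] in the functions (V -> 'a) -> 'a).\<close>
inductive_set poly_fun_on :: "'v set \<Rightarrow> (('v \<Rightarrow> 'a::comm_ring_1) \<Rightarrow> 'a) set"
  for V :: "'v set" where
  const: "(\<lambda>_. c) \<in> poly_fun_on V"
| var: "v \<in> V \<Longrightarrow> (\<lambda>x. x v) \<in> poly_fun_on V"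
| add: "f \<in> poly_fun_on V \<Longrightarrow> g \<in> poly_fun_on V \<Longrightarrow> (\<lambda>x. f x + g x) \<in> poly_fun_on V"
| mul: "f \<in> poly_fun_on V \<Longrightarrow> g \<in> poly_fun_on V \<Longrightarrow> (\<lambda>x. f x * g x) \<in> poly_fun_on V"

text \<open>Points of k^n: functions nat -> k supported in {1..n}; coordinate i is x i.\<close>
definition Uset :: "nat \<Rightarrow> (nat \<Rightarrow> 'a::zero) set" where
  "Uset n = {x. \<forall>i. (i = 0 \<or> n < i) \<longrightarrow> x i = 0}"

definition Usub :: "nat \<Rightarrow> nat \<Rightarrow> (nat \<Rightarrow> 'a::zero) set" where
  "Usub n i = {x \<in> Uset n. \<forall>j. i < j \<longrightarrow> x j = 0}"

definition umult :: "nat \<Rightarrow> (nat \<Rightarrow> (nat \<Rightarrow> 'a) \<Rightarrow> (nat \<Rightarrow> 'a) \<Rightarrow> 'a)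
    \<Rightarrow> (nat \<Rightarrow> 'a::comm_ring_1) \<Rightarrow> (nat \<Rightarrow> 'a) \<Rightarrow> (nat \<Rightarrow> 'a)" where
  "umult n \<psi> x y = (\<lambda>i. if 1 \<le> i \<and> i < n then x i + y i + \<psi> i x y
                         else if i = n then x i + y i else 0)"

definition Ugrp :: "nat \<Rightarrow> (nat \<Rightarrow> (nat \<Rightarrow> 'a) \<Rightarrow> (nat \<Rightarrow> 'a) \<Rightarrow> 'a)
    \<Rightarrow> (nat \<Rightarrow> 'a::comm_ring_1) monoid" where
  "Ugrp n \<psi> = \<lparr>carrier = Uset n, monoid.mult = umult n \<psi>, one = (\<lambda>_. 0)\<rparr>"

text \<open>Action of tau in T = k^* (with a_tau = tau) on U.\<close>
definition Tact :: "nat \<Rightarrow> (nat \<Rightarrow> int) \<Rightarrow> (nat \<Rightarrow> 'a \<Rightarrow> (nat \<Rightarrow> 'a) \<Rightarrow> 'a)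
    \<Rightarrow> 'a::field \<Rightarrow> (nat \<Rightarrow> 'a) \<Rightarrow> (nat \<Rightarrow> 'a)" where
  "Tact n e \<phi> \<tau> x = (\<lambda>i. if 1 \<le> i \<and> i < n then \<tau> powi e i * x i + \<phi> i \<tau> x
                          else if i = n then \<tau> powi e n * x n else 0)"

definition vlast :: "nat \<Rightarrow> 'a::zero \<Rightarrow> (nat \<Rightarrow> 'a)" where
  "vlast n u = (\<lambda>i. if i = n then u else 0)"

end

theory Submission
  imports Defs "HOL-Computational_Algebra.Polynomial"
begin


lemma alg_closed_infinite: "infinite (UNIV :: 'k::alg_closed_field set)"
proof
  assume fin: "finite (UNIV :: 'k set)"
  define q :: "'k poly" where "q = (\<Prod>a\<in>UNIV. [:-a, 1:])"
  have dq: "degree q = card (UNIV :: 'k set)"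
    unfolding q_def by (subst degree_prod_sum_eq) auto
  have "card (UNIV :: 'k set) > 0" using fin by (simp add: card_gt_0_iff)
  hence dpos: "degree q > 0" using dq by simp
  have "degree (q + 1) = degree q" using dpos by (simp add: degree_add_eq_left)
  with dpos obtain x where "poly (q + 1) x = 0"
    using alg_closed_imp_poly_has_root[of "q+1"] by auto
  moreover have "poly q x = 0"
    unfolding q_def poly_prod using fin by (intro prod_zero) auto
  ultimately show False by simp
qed

lemma poly_ext_inf:
  fixes p q :: "'k::alg_closed_field poly"
  assumes "\<And>x. poly p x = poly q x" shows "p = q"
proof (rule ccontr)
  assume "p \<noteq> q"
  hence "p - q \<noteq> 0" by simp
  hence "finite {x. poly (p - q) x = 0}" by (rule poly_roots_finite)
  moreover have "{x. poly (p - q) x = 0} = UNIV" using assms by auto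
  ultimately show False using alg_closed_infinite by auto
qed

lemma only_root_zero_monom:
  fixes p :: "'k::alg_closed_field poly"
  assumes "\<And>x. poly p x = 0 \<longleftrightarrow> x = 0"
  shows "\<exists>c r. c \<noteq> 0 \<and> p = monom c r"
proof -
  have "p \<noteq> 0" using assms[of 1] by auto
  then obtain A where A: "p = smult (lead_coeff p) (\<Prod>x\<in>#A. [:-x, 1:])"
    using alg_closed_imp_factorization by blast
  have A0: "x = 0" if "x \<in># A" for x
  proof -
    have "[:-x,1:] dvd (\<Prod>x\<in>#A. [:-x, 1:])"
      using that by (intro dvd_prod_mset) auto
    hence "[:-x,1:] dvd p" by (subst A) (simp add: dvd_smult)
    hence "poly p x = 0" by (simp add: poly_eq_0_iff_dvd)
    thus ?thesis using assms by simp
  qed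
  have "image_mset (\<lambda>x. [:-x, 1:]) A = image_mset (\<lambda>x. [:0, 1:]) A"
    using A0 by (intro image_mset_cong) auto
  hence "(\<Prod>x\<in>#A. [:-x, 1:]) = [:0,1:] ^ size A" by simp
  hence "p = monom (lead_coeff p) (size A)" using A by (simp add: monom_altdef)
  moreover have "lead_coeff p \<noteq> 0" using \<open>p \<noteq> 0\<close> by simp
  ultimately show ?thesis by blast
qed

lemma frob_add:
  fixes x y :: "'k::field"
  assumes "CHAR('k) > 0"
  shows "(x + y) ^ CHAR('k) = x ^ CHAR('k) + y ^ CHAR('k)"
proof -
  define p where "p = CHAR('k)"
  have pp: "prime p" using assms prime_CHAR_semidom p_def by blast
  have "(x + y) ^ p = (\<Sum>k\<le>p. of_nat (p choose k) * x^k * y^(p-k))"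
    by (rule binomial_ring)
  also have "\<dots> = (\<Sum>k\<in>{0,p}. of_nat (p choose k) * x^k * y^(p-k))"
  proof (rule sum.mono_neutral_right)
    show "\<forall>i\<in>{..p} - {0, p}. of_nat (p choose i) * x ^ i * y ^ (p - i) = 0"
    proof
      fix i assume i: "i \<in> {..p} - {0, p}"
      have "p dvd (p choose i)" using i pp by (intro dvd_choose_prime) auto
      hence "of_nat (p choose i) = (0::'k)" unfolding p_def by (simp add: of_nat_eq_0_iff_char_dvd)
      thus "of_nat (p choose i) * x ^ i * y ^ (p - i) = 0" by simp
    qed
  qed auto
  also have "\<dots> = x ^ p + y ^ p" using pp by (auto simp: prime_gt_0_nat)
  finally show ?thesis unfolding p_def .
qed

lemma frob_inj:
  fixes x y :: "'k::field"
  assumes "CHAR('k) > 0" "x ^ CHAR('k) = y ^ CHAR('k)"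
  shows "x = y"
proof -
  have pp: "prime CHAR('k)" using assms prime_CHAR_semidom by blast
  have "(x + (-y)) ^ CHAR('k) = x ^ CHAR('k) + (-y) ^ CHAR('k)" using frob_add assms by blast
  also have "(-y) ^ CHAR('k) = - (y ^ CHAR('k))" using minus_power_prime_CHAR pp by blast
  finally have "(x - y) ^ CHAR('k) = 0" using assms by simp
  thus ?thesis by simp
qed

lemma coeff1_nonadd:
  fixes r :: nat
  assumes "r \<ge> 2" "\<forall>x y::'k::alg_closed_field. (x + y) ^ r = x ^ r + y ^ r"
  shows "of_nat r = (0::'k)"
proof -
  have "[:1, 1:] ^ r = monom (1::'k) r + 1"
    using assms(2) by (intro poly_ext_inf) (simp add: poly_monom add.commute)
  hence "coeff ([:1, 1:] ^ r) 1 = coeff (monom (1::'k) r + 1) 1" by simp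
  thus ?thesis using assms(1) by (simp add: coeff_linear_poly_power)
qed

lemma additive_power:
  assumes "\<forall>x y::'k::alg_closed_field. (x + y) ^ r = x ^ r + y ^ r"
  shows "if CHAR('k) > 0 then (\<exists>a. r = CHAR('k) ^ a) else r = 1"
  using assms
proof (induction r rule: less_induct)
  case (less r)
  have r0: "r \<noteq> 0"
  proof
    assume "r = 0" with less.prems have "(1::'k) = 1 + 1" by (metis power_0)
    hence "(1::'k) = 0" by (metis add_cancel_right_right)
    thus False by simp
  qed
  show ?case
  proof (cases "CHAR('k) > 0")
    case False
    hence c0: "CHAR('k) = 0" by simp
    have "r = 1"
    proof (rule ccontr)
      assume "r \<noteq> 1" hence "r \<ge> 2" using r0 by simp
      hence "of_nat r = (0::'k)" using coeff1_nonadd less.prems by blast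
      thus False using c0 r0 by (simp add: of_nat_eq_0_iff_char_dvd)
    qed
    thus ?thesis using False by simp
  next
    case True
    define p where "p = CHAR('k)"
    have pp: "prime p" using True prime_CHAR_semidom p_def by blast
    show ?thesis
    proof (cases "p dvd r")
      case True
      then obtain r' where r': "r = p * r'" by blast
      have "r' < r" using r0 r' pp prime_gt_1_nat[OF pp] by simp
      moreover have "\<forall>x y::'k. (x + y) ^ r' = x ^ r' + y ^ r'"
      proof (intro allI)
        fix x y :: 'k
        have "((x + y) ^ r') ^ p = (x ^ r' + y ^ r') ^ p"
          using less.prems frob_add[of "x^r'" "y^r'"] \<open>CHAR('k) > 0\<close>
          by (simp add: r' p_def power_mult[symmetric] mult.commute)
        thus "(x + y) ^ r' = x ^ r' + y ^ r'" using frob_inj \<open>CHAR('k) > 0\<close> p_def by blast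
      qed
      ultimately obtain a where "r' = p ^ a" using less.IH \<open>CHAR('k) > 0\<close> p_def by fastforce
      hence "r = p ^ Suc a" using r' by simp
      thus ?thesis using \<open>CHAR('k) > 0\<close> p_def by (simp del: power_Suc) blast
    next
      case False
      have "r = 1"
      proof (rule ccontr)
        assume "r \<noteq> 1" hence "r \<ge> 2" using r0 by simp
        hence "of_nat r = (0::'k)" using coeff1_nonadd less.prems by blast
        thus False using False p_def by (simp add: of_nat_eq_0_iff_char_dvd)
      qed
      thus ?thesis using \<open>CHAR('k) > 0\<close> by (auto intro: exI[of _ 0])
    qed
  qed
qed




definition Pol2 :: "('k::comm_ring_1 \<Rightarrow> 'k \<Rightarrow> 'k) set" where
  "Pol2 = {f. \<exists>Q::'k poly poly. \<forall>u b. f u b = poly (poly Q [:b:]) u}"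

lemma ev2_map: "poly (poly Q [:b:]) u = poly (map_poly (\<lambda>c. poly c u) Q) (b::'k::comm_ring_1)"
  by (induction Q rule: pCons_induct) (auto simp: map_poly_pCons)

lemma finite_range_poly_const:
  fixes e :: "'k::alg_closed_field poly"
  assumes "finite (range (poly e))"
  shows "poly e x = poly e y"
proof (rule ccontr)
  assume ne: "poly e x \<noteq> poly e y"
  have nz: "e - [:v:] \<noteq> 0" for v
  proof
    assume "e - [:v:] = 0" hence "e = [:v:]" by simp
    thus False using ne by simp
  qed
  have "UNIV \<subseteq> (\<Union>v\<in>range (poly e). {t. poly (e - [:v:]) t = 0})" by auto
  moreover have "finite (\<Union>v\<in>range (poly e). {t. poly (e - [:v:]) t = 0})"
    using assms nz poly_roots_finite by blast
  ultimately show False using alg_closed_infinite finite_subset by blast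
qed

lemma infinite_roots_zero:
  fixes p :: "'k::alg_closed_field poly"
  assumes "infinite S" "\<And>x. x \<in> S \<Longrightarrow> poly p x = 0"
  shows "p = 0"
proof (rule ccontr)
  assume "p \<noteq> 0"
  hence "finite {x. poly p x = 0}" by (rule poly_roots_finite)
  moreover have "S \<subseteq> {x. poly p x = 0}" using assms by auto
  ultimately show False using assms(1) finite_subset by blast
qed

lemma core:
  fixes F D z :: "'k::alg_closed_field \<Rightarrow> 'k \<Rightarrow> 'k"
  assumes F_pol: "F \<in> Pol2" and D_pol: "D \<in> Pol2"
    and F_add: "\<And>u b b'. F u (b + b') = F u b + F u b'"
    and F_nz: "\<And>u b. u \<noteq> 0 \<Longrightarrow> (F u b = 0 \<longleftrightarrow> b = 0)"
    and F_0: "\<And>b. F 0 b = 0"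
    and FD: "\<And>u u' b. F u b + F u' b = F (u + u') b + D (z u u') b"
    and D_diag: "\<And>b. D b b = 0"
  shows "\<exists>c h k. c \<noteq> 0 \<and> (if CHAR('k) > 0 then (\<exists>a. h = CHAR('k) ^ a) \<and> (\<exists>b. k = CHAR('k) ^ b)
            else h = 1 \<and> k = 1) \<and> (\<forall>u b. F u b = c * u ^ h * b ^ k)"
proof -
  obtain Q :: "'k poly poly" where Q: "\<And>u b. F u b = poly (poly Q [:b:]) u"
    using F_pol unfolding Pol2_def by blast
  define fu where "fu u = map_poly (\<lambda>c. poly c u) Q" for u
  have Ffu: "F u b = poly (fu u) b" for u b unfolding fu_def Q ev2_map ..
  have cfu: "coeff (fu u) j = poly (coeff Q j) u" for u j
    unfolding fu_def by (simp add: coeff_map_poly)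
  have uniq: "poly (coeff Q j) u = 0" if "u \<noteq> 0" "poly (coeff Q i) u \<noteq> 0" "j \<noteq> i" for u i j
  proof -
    have "\<And>b. poly (fu u) b = 0 \<longleftrightarrow> b = 0" using F_nz[OF that(1)] Ffu by simp
    then obtain c r where "c \<noteq> 0" "fu u = monom c r" using only_root_zero_monom by blast
    thus ?thesis using that cfu[of u i] cfu[of u j] by (auto split: if_splits)
  qed
  have "fu 1 \<noteq> 0" using F_nz[of 1 1] Ffu by auto
  then obtain q where q1: "poly (coeff Q q) 1 \<noteq> 0"
    using cfu[of 1] by (metis leading_coeff_0_iff)
  have Qj: "coeff Q j = 0" if "j \<noteq> q" for j
  proof (rule ccontr)
    assume nz: "coeff Q j \<noteq> 0"
    have "coeff Q q \<noteq> 0" using q1 by auto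
    hence "coeff Q j * coeff Q q * [:0,1:] \<noteq> 0" using nz by simp
    hence "finite {x. poly (coeff Q j * coeff Q q * [:0,1:]) x = 0}" by (rule poly_roots_finite)
    then obtain u where "poly (coeff Q j * coeff Q q * [:0,1:]) u \<noteq> 0"
      using alg_closed_infinite by (metis (mono_tags, lifting) UNIV_eq_I mem_Collect_eq)
    hence "u \<noteq> 0" "poly (coeff Q j) u \<noteq> 0" "poly (coeff Q q) u \<noteq> 0" by auto
    thus False using uniq that by blast
  qed
  define A where "A = coeff Q q"
  have FA: "F u b = poly A u * b ^ q" for u b
  proof -
    have "fu u = monom (poly A u) q"
      by (rule poly_eqI) (auto simp: cfu A_def Qj)
    thus ?thesis using Ffu by (simp add: poly_monom)
  qed
  have "\<And>u. poly A u = 0 \<longleftrightarrow> u = 0"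
  proof -
    fix u show "poly A u = 0 \<longleftrightarrow> u = 0"
      using F_nz[of u 1] F_0[of 1] FA[of u 1] FA[of 0 1] by (cases "u = 0") auto
  qed
  then obtain c m where c: "c \<noteq> 0" and Am: "A = monom c m" using only_root_zero_monom by blast
  have Fcm: "F u b = c * u ^ m * b ^ q" for u b using FA Am by (simp add: poly_monom)
  have "\<forall>x y::'k. (x + y) ^ q = x ^ q + y ^ q"
    using F_add[of 1] c by (simp add: Fcm distrib_left[symmetric])
  hence qok: "if CHAR('k) > 0 then (\<exists>a. q = CHAR('k) ^ a) else q = 1" by (rule additive_power)
  have m0: "m \<noteq> 0"
  proof
    assume "m = 0" thus False using F_0[of 1] Fcm[of 0 1] c by simp
  qed
  define E where "E u u' = u ^ m + u' ^ m - (u + u') ^ m" for u u' :: 'k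
  obtain QD :: "'k poly poly" where QD: "\<And>u b. D u b = poly (poly QD [:b:]) u"
    using D_pol unfolding Pol2_def by blast
  define dz where "dz t = map_poly (\<lambda>c. poly c t) QD" for t
  have Ddz: "D t b = poly (dz t) b" for t b unfolding dz_def QD ev2_map ..
  have cdz: "coeff (dz t) j = poly (coeff QD j) t" for t j
    unfolding dz_def by (simp add: coeff_map_poly)
  have dzE: "dz (z u u') = monom (c * E u u') q" for u u'
  proof (rule poly_ext_inf)
    fix b
    have "D (z u u') b = F u b + F u' b - F (u + u') b" using FD[where u=u and u'=u' and b=b] by simp
    thus "poly (dz (z u u')) b = poly (monom (c * E u u') q) b"
      by (simp add: Ddz Fcm poly_monom E_def algebra_simps)
  qed
  have cz: "poly (coeff QD j) (z u u') = (if j = q then c * E u u' else 0)" for j u u'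
    using arg_cong[OF dzE[of u u'], of "\<lambda>p. coeff p j"] cdz by auto
  have E0: "E u u' = 0" for u u'
  proof (cases "finite (range (case_prod z))")
    case False
    have QDj: "coeff QD j = 0" if "j \<noteq> q" for j
      by (rule infinite_roots_zero[OF False]) (use cz that in auto)
    have "dz b = monom (poly (coeff QD q) b) q" for b
      by (rule poly_eqI) (auto simp: cdz QDj)
    hence "poly (coeff QD q) b * b ^ q = 0" for b using D_diag[of b] Ddz by (simp add: poly_monom)
    hence "coeff QD q = 0"
      by (intro infinite_roots_zero[of "UNIV - {0}"]) (auto simp: alg_closed_infinite)
    thus ?thesis using cz[of q u u'] c by simp
  next
    case True
    define e where "e = monom 1 m + [:u' ^ m:] - [:u', 1:] ^ m"
    have pe: "poly e t = E t u'" for t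
      by (simp add: e_def E_def poly_monom add.commute)
    have "range (poly e) \<subseteq> (\<lambda>v. v / c) ` (poly (coeff QD q) ` range (case_prod z))"
    proof
      fix y assume "y \<in> range (poly e)"
      then obtain t where y: "y = E t u'" using pe by auto
      have "c * E t u' = poly (coeff QD q) (case_prod z (t, u'))" using cz[of q t u'] by simp
      hence "y = poly (coeff QD q) (case_prod z (t, u')) / c" using y c by (simp add: field_simps)
      thus "y \<in> (\<lambda>v. v / c) ` (poly (coeff QD q) ` range (case_prod z))" by blast
    qed
    hence "finite (range (poly e))" using True finite_subset by blast
    hence "poly e u = poly e 0" by (rule finite_range_poly_const)
    thus ?thesis using pe m0 by (simp add: E_def)
  qed
  have "\<forall>x y::'k. (x + y) ^ m = x ^ m + y ^ m" using E0 by (simp add: E_def)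
  hence mok: "if CHAR('k) > 0 then (\<exists>a. m = CHAR('k) ^ a) else m = 1" by (rule additive_power)
  show ?thesis
    using c qok mok Fcm by (intro exI[of _ c] exI[of _ m] exI[of _ q]) (auto split: if_splits)
qed




lemma Pol2_const: "(\<lambda>u b. c) \<in> Pol2"
  unfolding Pol2_def by (rule CollectI, rule exI[of _ "[:[:c:]:]"]) simp
lemma Pol2_fst: "(\<lambda>u b. u) \<in> Pol2"
  unfolding Pol2_def by (rule CollectI, rule exI[of _ "[:[:0,1:]:]"]) simp
lemma Pol2_snd: "(\<lambda>u b. b) \<in> Pol2"
  unfolding Pol2_def by (rule CollectI, rule exI[of _ "[:0,1:]"]) simp
lemma Pol2_add: "f \<in> Pol2 \<Longrightarrow> g \<in> Pol2 \<Longrightarrow> (\<lambda>u b. f u b + g u b) \<in> Pol2"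
proof -
  assume "f \<in> Pol2" "g \<in> Pol2"
  then obtain Q1 Q2 where "\<forall>u b. f u b = poly (poly Q1 [:b:]) u" "\<forall>u b. g u b = poly (poly Q2 [:b:]) u"
    unfolding Pol2_def by blast
  thus ?thesis unfolding Pol2_def by (intro CollectI exI[of _ "Q1 + Q2"]) simp
qed
lemma Pol2_mult: "f \<in> Pol2 \<Longrightarrow> g \<in> Pol2 \<Longrightarrow> (\<lambda>u b. f u b * g u b) \<in> Pol2"
proof -
  assume "f \<in> Pol2" "g \<in> Pol2"
  then obtain Q1 Q2 where "\<forall>u b. f u b = poly (poly Q1 [:b:]) u" "\<forall>u b. g u b = poly (poly Q2 [:b:]) u"
    unfolding Pol2_def by blast
  thus ?thesis unfolding Pol2_def by (intro CollectI exI[of _ "Q1 * Q2"]) simp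
qed
lemma Pol2_uminus: "f \<in> Pol2 \<Longrightarrow> (\<lambda>u b. - f u b) \<in> Pol2"
proof -
  assume "f \<in> Pol2"
  then obtain Q1 where "\<forall>u b. f u b = poly (poly Q1 [:b:]) u"
    unfolding Pol2_def by blast
  thus ?thesis unfolding Pol2_def by (intro CollectI exI[of _ "- Q1"]) simp
qed
lemma Pol2_diff: "f \<in> Pol2 \<Longrightarrow> g \<in> Pol2 \<Longrightarrow> (\<lambda>u b. f u b - g u b) \<in> Pol2"
  using Pol2_add[of f "\<lambda>u b. - g u b"] Pol2_uminus[of g] by simp

lemma Pol2_subst:
  assumes "P \<in> poly_fun_on V" "\<And>v. \<sigma> v \<in> Pol2"
  shows "(\<lambda>u b. P (\<lambda>v. \<sigma> v u b)) \<in> Pol2"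
  using assms(1)
proof induction
  case (const c) show ?case by (rule Pol2_const)
next
  case (var v) show ?case using assms(2)[of v] by simp
next
  case (add f g) thus ?case using Pol2_add by fast
next
  case (mul f g) thus ?case using Pol2_mult by fast
qed

lemma pfo_dep:
  assumes "P \<in> poly_fun_on V" "\<forall>v\<in>V. f v = g v"
  shows "P f = P g"
  using assms(1) by induction (use assms(2) in auto)




locale Uctx =
  fixes n :: nat and \<psi> :: "nat \<Rightarrow> (nat \<Rightarrow> 'k::alg_closed_field) \<Rightarrow> (nat \<Rightarrow> 'k) \<Rightarrow> 'k"
  assumes n3: "n \<ge> 3"
    and psi_poly: "\<forall>j. 1 \<le> j \<and> j < n \<longrightarrow>
        (\<exists>P \<in> poly_fun_on (Inl ` {j<..n} \<union> Inr ` {j<..n}).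
           \<forall>x y. \<psi> j x y = P (case_sum x y))"
    and grp: "group (Ugrp n \<psi>)"
begin

abbreviation "G \<equiv> Ugrp n \<psi>"

lemma carrier_G [simp]: "carrier G = Uset n" by (simp add: Ugrp_def)
lemma mult_G: "x \<otimes>\<^bsub>G\<^esub> y = umult n \<psi> x y" by (simp add: Ugrp_def)
lemma one_G [simp]: "\<one>\<^bsub>G\<^esub> = (\<lambda>_. 0)" by (simp add: Ugrp_def)

definition ELEM :: "'k \<Rightarrow> 'k \<Rightarrow> 'k \<Rightarrow> nat \<Rightarrow> 'k" where
  "ELEM a b t = (\<lambda>i. if i = n - 2 then a else if i = n - 1 then b else if i = n then t else 0)"

lemma ELEM_simps [simp]: "ELEM a b t (n - 2) = a" "ELEM a b t (n - 1) = b" "ELEM a b t n = t"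
   "ELEM a b t (n - Suc 0) = b"
  using n3 by (auto simp: ELEM_def)

lemma ELEM_carrier [simp]: "ELEM a b t \<in> Uset n"
  using n3 by (auto simp: ELEM_def Uset_def)

lemma zero_Uset [simp]: "(\<lambda>_. 0) \<in> Uset n" by (simp add: Uset_def)

lemma ELEM_0: "ELEM 0 0 0 = (\<lambda>_. 0)" by (auto simp: ELEM_def)

definition \<gamma> :: "'k \<Rightarrow> 'k \<Rightarrow> 'k" where "\<gamma> s t = \<psi> (n - 1) (ELEM 0 0 s) (ELEM 0 0 t)"
definition \<beta> :: "'k \<Rightarrow> 'k \<Rightarrow> 'k \<Rightarrow> 'k \<Rightarrow> 'k" where
  "\<beta> b s b' t = \<psi> (n - 2) (ELEM 0 b s) (ELEM 0 b' t)"

lemma psi_dep: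
  assumes "1 \<le> j" "j < n" "\<And>i. j < i \<Longrightarrow> i \<le> n \<Longrightarrow> x i = x' i \<and> y i = y' i"
  shows "\<psi> j x y = \<psi> j x' y'"
proof -
  obtain P where P: "P \<in> poly_fun_on (Inl ` {j<..n} \<union> Inr ` {j<..n})" "\<forall>x y. \<psi> j x y = P (case_sum x y)"
    using psi_poly assms(1,2) by blast
  have "P (case_sum x y) = P (case_sum x' y')"
    by (rule pfo_dep[OF P(1)]) (use assms(3) in auto)
  thus ?thesis using P(2) by simp
qed

lemma psi_pol:
  assumes "1 \<le> j" "j < n" "\<And>i. X i \<in> Pol2" "\<And>i. Y i \<in> Pol2"
  shows "(\<lambda>u b. \<psi> j (\<lambda>i. X i u b) (\<lambda>i. Y i u b)) \<in> Pol2"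
proof -
  obtain P where P: "P \<in> poly_fun_on (Inl ` {j<..n} \<union> Inr ` {j<..n})" "\<forall>x y. \<psi> j x y = P (case_sum x y)"
    using psi_poly assms(1,2) by blast
  have s: "(\<lambda>u b. P (\<lambda>v. (case_sum X Y) v u b)) \<in> Pol2"
    by (rule Pol2_subst[OF P(1)]) (auto split: sum.splits simp: assms)
  have "case_sum (\<lambda>i. X i u b) (\<lambda>i. Y i u b) = (\<lambda>v. (case_sum X Y) v u b)" for u b
    by (auto split: sum.splits)
  thus ?thesis using s P(2) by simp
qed

lemma ELEM_pol: "a \<in> Pol2 \<Longrightarrow> b \<in> Pol2 \<Longrightarrow> t \<in> Pol2 \<Longrightarrow> (\<lambda>x y. ELEM (a x y) (b x y) (t x y) i) \<in> Pol2"
  unfolding ELEM_def by (cases "i = n - 2"; cases "i = n - 1"; cases "i = n") (use n3 in \<open>simp_all add: Pol2_const\<close>)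

lemma gamma_pol: "s \<in> Pol2 \<Longrightarrow> t \<in> Pol2 \<Longrightarrow> (\<lambda>x y. \<gamma> (s x y) (t x y)) \<in> Pol2"
  unfolding \<gamma>_def using n3
  by (intro psi_pol[where X="\<lambda>i x y. ELEM 0 0 (s x y) i" and Y="\<lambda>i x y. ELEM 0 0 (t x y) i", simplified])
     (auto intro!: ELEM_pol Pol2_const)

lemma beta_pol: "b \<in> Pol2 \<Longrightarrow> s \<in> Pol2 \<Longrightarrow> b' \<in> Pol2 \<Longrightarrow> t \<in> Pol2 \<Longrightarrow>
   (\<lambda>x y. \<beta> (b x y) (s x y) (b' x y) (t x y)) \<in> Pol2"
  unfolding \<beta>_def using n3
  by (intro psi_pol[where X="\<lambda>i x y. ELEM 0 (b x y) (s x y) i" and Y="\<lambda>i x y. ELEM 0 (b' x y) (t x y) i", simplified])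
     (auto intro!: ELEM_pol Pol2_const)

lemma mult_coords:
  assumes "x \<in> Uset n" "y \<in> Uset n"
  shows "umult n \<psi> x y n = x n + y n"
    "umult n \<psi> x y (n - 1) = x (n - 1) + y (n - 1) + \<gamma> (x n) (y n)"
    "umult n \<psi> x y (n - 2) = x (n - 2) + y (n - 2) + \<beta> (x (n - 1)) (x n) (y (n - 1)) (y n)"
proof -
  show "umult n \<psi> x y n = x n + y n" by (simp add: umult_def)
  have "\<psi> (n - 1) x y = \<gamma> (x n) (y n)" unfolding \<gamma>_def
  proof (intro psi_dep)
    fix i assume "n - 1 < i" "i \<le> n"
    hence "i = n" by auto
    thus "x i = ELEM 0 0 (x n) i \<and> y i = ELEM 0 0 (y n) i" by auto
  qed (use n3 in auto)
  thus "umult n \<psi> x y (n - 1) = x (n - 1) + y (n - 1) + \<gamma> (x n) (y n)"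
    using n3 by (simp add: umult_def)
  have "\<psi> (n - 2) x y = \<beta> (x (n - 1)) (x n) (y (n - 1)) (y n)" unfolding \<beta>_def
  proof (intro psi_dep)
    fix i assume "n - 2 < i" "i \<le> n"
    hence "i = n - 1 \<or> i = n" by auto
    thus "x i = ELEM 0 (x (n - 1)) (x n) i \<and> y i = ELEM 0 (y (n - 1)) (y n) i" by auto
  qed (use n3 in auto)
  thus "umult n \<psi> x y (n - 2) = x (n - 2) + y (n - 2) + \<beta> (x (n - 1)) (x n) (y (n - 1)) (y n)"
    using n3 by (simp add: umult_def)
qed

lemma gamma_0: "\<gamma> s 0 = 0" "\<gamma> 0 t = 0"
proof -
  have "umult n \<psi> (ELEM 0 0 s) (\<lambda>_. 0) = ELEM 0 0 s"
    using group.is_monoid[OF grp] monoid.r_one[of G "ELEM 0 0 s"] by (simp add: mult_G)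
  from arg_cong[OF this, of "\<lambda>f. f (n - 1)"] show "\<gamma> s 0 = 0"
    using mult_coords(2)[of "ELEM 0 0 s" "ELEM 0 0 0"] by (simp add: ELEM_0)
  have "umult n \<psi> (\<lambda>_. 0) (ELEM 0 0 t) = ELEM 0 0 t"
    using group.is_monoid[OF grp] monoid.l_one[of G "ELEM 0 0 t"] by (simp add: mult_G)
  from arg_cong[OF this, of "\<lambda>f. f (n - 1)"] show "\<gamma> 0 t = 0"
    using mult_coords(2)[of "ELEM 0 0 0" "ELEM 0 0 t"] by (simp add: ELEM_0)
qed

lemma beta_0: "\<beta> b s 0 0 = 0" "\<beta> 0 0 b t = 0"
proof -
  have "umult n \<psi> (ELEM 0 b s) (\<lambda>_. 0) = ELEM 0 b s"
    using group.is_monoid[OF grp] monoid.r_one[of G "ELEM 0 b s"] by (simp add: mult_G)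
  from arg_cong[OF this, of "\<lambda>f. f (n - 2)"] show "\<beta> b s 0 0 = 0"
    using mult_coords(3)[of "ELEM 0 b s" "ELEM 0 0 0"] by (simp add: ELEM_0)
  have "umult n \<psi> (\<lambda>_. 0) (ELEM 0 b t) = ELEM 0 b t"
    using group.is_monoid[OF grp] monoid.l_one[of G "ELEM 0 b t"] by (simp add: mult_G)
  from arg_cong[OF this, of "\<lambda>f. f (n - 2)"] show "\<beta> 0 0 b t = 0"
    using mult_coords(3)[of "ELEM 0 0 0" "ELEM 0 b t"] by (simp add: ELEM_0)
qed


lemma mc:
  assumes "x \<in> Uset n" "y \<in> Uset n"
  shows "(x \<otimes>\<^bsub>G\<^esub> y) n = x n + y n"
    "(x \<otimes>\<^bsub>G\<^esub> y) (n - 1) = x (n - 1) + y (n - 1) + \<gamma> (x n) (y n)"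
    "(x \<otimes>\<^bsub>G\<^esub> y) (n - 2) = x (n - 2) + y (n - 2) + \<beta> (x (n - 1)) (x n) (y (n - 1)) (y n)"
  using mult_coords[OF assms] by (simp_all add: mult_G)

lemma lin_solve: "a + x + c = (0::'k) \<Longrightarrow> x = - a - c"
proof -
  assume h: "a + x + c = 0"
  have "x = (a + x + c) - a - c" by (simp add: algebra_simps)
  thus ?thesis using h by simp
qed

lemma inv_coords:
  assumes Y: "Y \<in> Uset n"
  shows "(inv\<^bsub>G\<^esub> Y) n = - Y n"
    "(inv\<^bsub>G\<^esub> Y) (n - 1) = - Y (n - 1) - \<gamma> (Y n) (- Y n)"
    "(inv\<^bsub>G\<^esub> Y) (n - 2) = - Y (n - 2) - \<beta> (Y (n - 1)) (Y n) ((inv\<^bsub>G\<^esub> Y) (n - 1)) (- Y n)"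
proof -
  interpret g: group G by (rule grp)
  have I: "inv\<^bsub>G\<^esub> Y \<in> Uset n" using Y g.inv_closed by simp
  have r: "Y \<otimes>\<^bsub>G\<^esub> inv\<^bsub>G\<^esub> Y = (\<lambda>_. 0)" using Y g.r_inv by simp
  have c: "(Y \<otimes>\<^bsub>G\<^esub> inv\<^bsub>G\<^esub> Y) i = 0" for i using r by simp
  have e1: "Y n + (inv\<^bsub>G\<^esub> Y) n = 0" using c[of n] mc(1)[OF Y I] by simp
  show n: "(inv\<^bsub>G\<^esub> Y) n = - Y n" using e1 by (metis add.commute eq_neg_iff_add_eq_0)
  have e2: "Y (n - 1) + (inv\<^bsub>G\<^esub> Y) (n - 1) + \<gamma> (Y n) (- Y n) = 0"
    using c[of "n-1"] mc(2)[OF Y I] n by simp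
  thus "(inv\<^bsub>G\<^esub> Y) (n - 1) = - Y (n - 1) - \<gamma> (Y n) (- Y n)"
    by (rule lin_solve)
  have e3: "Y (n - 2) + (inv\<^bsub>G\<^esub> Y) (n - 2) + \<beta> (Y (n - 1)) (Y n) ((inv\<^bsub>G\<^esub> Y) (n - 1)) (- Y n) = 0"
    using c[of "n-2"] mc(3)[OF Y I] n by simp
  thus "(inv\<^bsub>G\<^esub> Y) (n - 2) = - Y (n - 2) - \<beta> (Y (n - 1)) (Y n) ((inv\<^bsub>G\<^esub> Y) (n - 1)) (- Y n)"
    by (rule lin_solve)
qed

definition J1 :: "'k \<Rightarrow> 'k \<Rightarrow> 'k" where "J1 z s = - z - \<gamma> s (- s)"
definition H :: "'k \<Rightarrow> 'k \<Rightarrow> 'k \<Rightarrow> 'k" where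
  "H z s b = \<beta> z s b 0 - \<beta> z s (J1 z s) (- s) + \<beta> (z + b) s (J1 z s) (- s)"

lemma conj_coords:
  assumes Y: "Y \<in> Uset n" and g: "g \<in> Uset n" and gn: "g n = 0"
  shows "(Y \<otimes>\<^bsub>G\<^esub> g \<otimes>\<^bsub>G\<^esub> inv\<^bsub>G\<^esub> Y) n = 0"
    "(Y \<otimes>\<^bsub>G\<^esub> g \<otimes>\<^bsub>G\<^esub> inv\<^bsub>G\<^esub> Y) (n - 1) = g (n - 1)"
    "(Y \<otimes>\<^bsub>G\<^esub> g \<otimes>\<^bsub>G\<^esub> inv\<^bsub>G\<^esub> Y) (n - 2) = g (n - 2) + H (Y (n - 1)) (Y n) (g (n - 1))"
proof -
  interpret gr: group G by (rule grp)
  have I: "inv\<^bsub>G\<^esub> Y \<in> Uset n" using Y gr.inv_closed by simp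
  have W: "Y \<otimes>\<^bsub>G\<^esub> g \<in> Uset n" using Y g gr.m_closed by simp
  note mY = mc[OF Y g] and mW = mc[OF W I] and iY = inv_coords[OF Y]
  show "(Y \<otimes>\<^bsub>G\<^esub> g \<otimes>\<^bsub>G\<^esub> inv\<^bsub>G\<^esub> Y) n = 0" using mY mW iY gn by simp
  show "(Y \<otimes>\<^bsub>G\<^esub> g \<otimes>\<^bsub>G\<^esub> inv\<^bsub>G\<^esub> Y) (n - 1) = g (n - 1)" using mY mW iY gn by (simp add: gamma_0)
  have i1: "(inv\<^bsub>G\<^esub> Y) (n - 1) = J1 (Y (n - 1)) (Y n)" using iY(2) by (simp add: J1_def)
  have i2: "(inv\<^bsub>G\<^esub> Y) (n - 2) = - Y (n - 2) - \<beta> (Y (n - 1)) (Y n) (J1 (Y (n - 1)) (Y n)) (- Y n)"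
    using iY(3) i1 by simp
  have w1: "(Y \<otimes>\<^bsub>G\<^esub> g) (n - 1) = Y (n - 1) + g (n - 1)" using mY(2) gn by (simp add: gamma_0)
  have w2: "(Y \<otimes>\<^bsub>G\<^esub> g) (n - 2) = Y (n - 2) + g (n - 2) + \<beta> (Y (n - 1)) (Y n) (g (n - 1)) 0"
    using mY(3) gn by simp
  have "(Y \<otimes>\<^bsub>G\<^esub> g \<otimes>\<^bsub>G\<^esub> inv\<^bsub>G\<^esub> Y) (n - 2) = (Y \<otimes>\<^bsub>G\<^esub> g) (n - 2) + (inv\<^bsub>G\<^esub> Y) (n - 2)
      + \<beta> ((Y \<otimes>\<^bsub>G\<^esub> g) (n - 1)) ((Y \<otimes>\<^bsub>G\<^esub> g) n) ((inv\<^bsub>G\<^esub> Y) (n - 1)) ((inv\<^bsub>G\<^esub> Y) n)"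
    by (rule mW(3))
  also have "\<dots> = g (n - 2) + H (Y (n - 1)) (Y n) (g (n - 1))"
    unfolding w1 w2 i1 i2 mY(1) iY(1) gn H_def by (simp add: algebra_simps)
  finally show "(Y \<otimes>\<^bsub>G\<^esub> g \<otimes>\<^bsub>G\<^esub> inv\<^bsub>G\<^esub> Y) (n - 2) = g (n - 2) + H (Y (n - 1)) (Y n) (g (n - 1))" .
qed

definition eqv :: "(nat \<Rightarrow> 'k) \<Rightarrow> (nat \<Rightarrow> 'k) \<Rightarrow> bool" where
  "eqv x y \<longleftrightarrow> x (n - 2) = y (n - 2) \<and> x (n - 1) = y (n - 1) \<and> x n = y n"

lemma eqv_cong:
  assumes "x \<in> Uset n" "y \<in> Uset n" "x' \<in> Uset n" "y' \<in> Uset n" "eqv x x'" "eqv y y'"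
  shows "eqv (x \<otimes>\<^bsub>G\<^esub> y) (x' \<otimes>\<^bsub>G\<^esub> y')"
  using assms mc[OF assms(1,2)] mc[OF assms(3,4)] unfolding eqv_def by simp

lemma Usub3_iff: "z \<in> Usub n (n - 3) \<longleftrightarrow> z \<in> Uset n \<and> eqv z (\<lambda>_. 0)"
proof
  assume "z \<in> Usub n (n - 3)" thus "z \<in> Uset n \<and> eqv z (\<lambda>_. 0)"
    using n3 unfolding Usub_def eqv_def by auto
next
  assume a: "z \<in> Uset n \<and> eqv z (\<lambda>_. 0)"
  have "z j = 0" if "n - 3 < j" for j
  proof (cases "j \<le> n")
    case True
    hence "j = n - 2 \<or> j = n - 1 \<or> j = n" using that n3 by auto
    thus ?thesis using a unfolding eqv_def by auto
  next
    case False thus ?thesis using a unfolding Uset_def by auto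
  qed
  thus "z \<in> Usub n (n - 3)" using a unfolding Usub_def by auto
qed

lemma inv_mult_N_iff:
  assumes x: "x \<in> Uset n" and y: "y \<in> Uset n"
  shows "inv\<^bsub>G\<^esub> x \<otimes>\<^bsub>G\<^esub> y \<in> Usub n (n - 3) \<longleftrightarrow> eqv x y"
proof -
  interpret gr: group G by (rule grp)
  have I: "inv\<^bsub>G\<^esub> x \<in> Uset n" using x gr.inv_closed by simp
  have M: "inv\<^bsub>G\<^esub> x \<otimes>\<^bsub>G\<^esub> y \<in> Uset n" using I y gr.m_closed by simp
  have refl: "eqv a a" for a unfolding eqv_def by simp
  have sym: "eqv a b \<Longrightarrow> eqv b a" for a b unfolding eqv_def by simp
  show ?thesis
  proof
    assume "inv\<^bsub>G\<^esub> x \<otimes>\<^bsub>G\<^esub> y \<in> Usub n (n - 3)"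
    hence e: "eqv (inv\<^bsub>G\<^esub> x \<otimes>\<^bsub>G\<^esub> y) (\<lambda>_. 0)" using Usub3_iff by blast
    have "eqv (x \<otimes>\<^bsub>G\<^esub> (inv\<^bsub>G\<^esub> x \<otimes>\<^bsub>G\<^esub> y)) (x \<otimes>\<^bsub>G\<^esub> (\<lambda>_. 0))"
      by (rule eqv_cong) (use x M e refl in auto)
    moreover have "x \<otimes>\<^bsub>G\<^esub> (inv\<^bsub>G\<^esub> x \<otimes>\<^bsub>G\<^esub> y) = y"
      using x y I by (simp add: gr.m_assoc[symmetric] gr.r_inv del: mult_G)
    moreover have "x \<otimes>\<^bsub>G\<^esub> (\<lambda>_. 0) = x" using x gr.r_one by simp
    ultimately show "eqv x y" using sym by simp
  next
    assume e: "eqv x y"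
    have "eqv (inv\<^bsub>G\<^esub> x \<otimes>\<^bsub>G\<^esub> y) (inv\<^bsub>G\<^esub> x \<otimes>\<^bsub>G\<^esub> x)"
      by (rule eqv_cong) (use x y I e refl sym in auto)
    moreover have "inv\<^bsub>G\<^esub> x \<otimes>\<^bsub>G\<^esub> x = (\<lambda>_. 0)" using x gr.l_inv by simp
    ultimately show "inv\<^bsub>G\<^esub> x \<otimes>\<^bsub>G\<^esub> y \<in> Usub n (n - 3)" using Usub3_iff M by simp
  qed
qed

end



lemma (in group) conj_mult:
  assumes "x \<in> carrier G" "a \<in> carrier G" "b \<in> carrier G"
  shows "x \<otimes> (a \<otimes> b) \<otimes> inv x = (x \<otimes> a \<otimes> inv x) \<otimes> (x \<otimes> b \<otimes> inv x)"
proof -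
  have cancel: "inv x \<otimes> (x \<otimes> c) = c" if "c \<in> carrier G" for c
    using assms that by (simp add: m_assoc[symmetric] l_inv)
  have "(x \<otimes> a \<otimes> inv x) \<otimes> (x \<otimes> b \<otimes> inv x) = x \<otimes> a \<otimes> (inv x \<otimes> x) \<otimes> b \<otimes> inv x"
    using assms by (simp add: m_assoc cancel)
  also have "\<dots> = x \<otimes> (a \<otimes> b) \<otimes> inv x" using assms by (simp add: l_inv) (simp add: m_assoc)
  finally show ?thesis by simp
qed

lemma (in group) conj_comp:
  assumes "x \<in> carrier G" "y \<in> carrier G" "g \<in> carrier G"
  shows "x \<otimes> y \<otimes> g \<otimes> inv (x \<otimes> y) = x \<otimes> (y \<otimes> g \<otimes> inv y) \<otimes> inv x"
  using assms by (simp add: inv_mult_group m_assoc)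

context Uctx begin



lemma F_pol: "(\<lambda>u b. H 0 u b) \<in> Pol2"
proof -
  have m: "(\<lambda>u (b::'k). - u) \<in> Pol2" using Pol2_uminus[OF Pol2_fst] by simp
  have g: "(\<lambda>u (b::'k). - \<gamma> u (- u)) \<in> Pol2" using Pol2_uminus[OF gamma_pol[OF Pol2_fst m]] by simp
  have 1: "(\<lambda>u b. \<beta> 0 u b 0) \<in> Pol2" using beta_pol[OF Pol2_const Pol2_fst Pol2_snd Pol2_const] by simp
  have 2: "(\<lambda>u b. \<beta> 0 u (- \<gamma> u (- u)) (- u)) \<in> Pol2" using beta_pol[OF Pol2_const Pol2_fst g m] by simp
  have 3: "(\<lambda>u b. \<beta> b u (- \<gamma> u (- u)) (- u)) \<in> Pol2" using beta_pol[OF Pol2_snd Pol2_fst g m] by simp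
  show ?thesis using Pol2_add[OF Pol2_diff[OF 1 2] 3] by (simp add: H_def J1_def)
qed

lemma D_pol: "(\<lambda>z b. H z 0 b) \<in> Pol2"
proof -
  have m: "(\<lambda>u (b::'k). - u) \<in> Pol2" using Pol2_uminus[OF Pol2_fst] by simp
  have s: "(\<lambda>u (b::'k). u + b) \<in> Pol2" using Pol2_add[OF Pol2_fst Pol2_snd] by simp
  have 1: "(\<lambda>u b. \<beta> u 0 b 0) \<in> Pol2" using beta_pol[OF Pol2_fst Pol2_const Pol2_snd Pol2_const] by simp
  have 2: "(\<lambda>u b. \<beta> u 0 (- u) 0) \<in> Pol2" using beta_pol[OF Pol2_fst Pol2_const m Pol2_const] by simp
  have 3: "(\<lambda>u b. \<beta> (u + b) 0 (- u) 0) \<in> Pol2" using beta_pol[OF s Pol2_const m Pol2_const] by simp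
  show ?thesis using Pol2_add[OF Pol2_diff[OF 1 2] 3] by (simp add: H_def J1_def gamma_0)
qed


lemma vlast_ELEM: "vlast n u = ELEM 0 0 u" unfolding vlast_def ELEM_def using n3 by (intro ext) auto

lemma Usub1_iff: "g \<in> Usub n (n - 1) \<longleftrightarrow> g \<in> Uset n \<and> g n = 0"
proof
  assume "g \<in> Uset n \<and> g n = 0"
  moreover have "g j = 0" if "g \<in> Uset n" "g n = 0" "n - 1 < j" for j
    using that by (cases "j = n") (auto simp: Uset_def)
  ultimately show "g \<in> Usub n (n - 1)" by (auto simp: Usub_def)
qed (use n3 in \<open>auto simp: Usub_def\<close>)

lemma ELEM_Usub2: "ELEM 0 b 0 \<in> Usub n (n - 2) \<longleftrightarrow> b = 0"
proof
  assume "ELEM 0 b 0 \<in> Usub n (n - 2)"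
  hence "\<forall>j. n - 2 < j \<longrightarrow> ELEM 0 b 0 j = 0" unfolding Usub_def by auto
  moreover have "n - 2 < n - 1" using n3 by simp
  ultimately have "ELEM 0 b 0 (n - 1) = 0" by blast
  thus "b = 0" by simp
qed (auto simp: Usub_def ELEM_0)

lemma conjV:
  assumes "g \<in> Uset n" "g n = 0"
  shows "(ELEM 0 0 u \<otimes>\<^bsub>G\<^esub> g \<otimes>\<^bsub>G\<^esub> inv\<^bsub>G\<^esub> (ELEM 0 0 u)) n = 0"
    "(ELEM 0 0 u \<otimes>\<^bsub>G\<^esub> g \<otimes>\<^bsub>G\<^esub> inv\<^bsub>G\<^esub> (ELEM 0 0 u)) (n - 1) = g (n - 1)"
    "(ELEM 0 0 u \<otimes>\<^bsub>G\<^esub> g \<otimes>\<^bsub>G\<^esub> inv\<^bsub>G\<^esub> (ELEM 0 0 u)) (n - 2) = g (n - 2) + H 0 u (g (n - 1))"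
  using conj_coords[OF ELEM_carrier assms] by simp_all

lemma main:
  assumes cent: "\<forall>u::'k. u \<noteq> 0 \<longrightarrow> (\<forall>g \<in> Usub n (n - 1).
        (inv\<^bsub>G\<^esub> (vlast n u \<otimes>\<^bsub>G\<^esub> g) \<otimes>\<^bsub>G\<^esub> (g \<otimes>\<^bsub>G\<^esub> vlast n u)
           \<in> Usub n (n - 3)) \<longleftrightarrow> g \<in> Usub n (n - 2))"
  shows "\<exists>c::'k. c \<noteq> 0 \<and> (\<exists>h k::nat.
     (if CHAR('k) > 0 then (\<exists>a. h = CHAR('k) ^ a) \<and> (\<exists>b. k = CHAR('k) ^ b) else h = 1 \<and> k = 1) \<and>
     (\<forall>u::'k. \<forall>g \<in> Usub n (n - 1).
        inv\<^bsub>G\<^esub> (g(n - 2 := g (n - 2) + c * u ^ h * g (n - 1) ^ k))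
          \<otimes>\<^bsub>G\<^esub> (vlast n u \<otimes>\<^bsub>G\<^esub> g \<otimes>\<^bsub>G\<^esub> inv\<^bsub>G\<^esub> (vlast n u))
        \<in> Usub n (n - 3)))"
proof -
  interpret gr: group G by (rule grp)
  define V where "V u = ELEM 0 0 u" for u
  define F where "F u b = H 0 u b" for u b
  define D where "D z b = H z 0 b" for z b
  define z where "z u u' = (inv\<^bsub>G\<^esub> (V (u + u')) \<otimes>\<^bsub>G\<^esub> (V u \<otimes>\<^bsub>G\<^esub> V u')) (n - 1)" for u u'
  have VC [simp]: "V u \<in> Uset n" for u by (simp add: V_def)
  have VG: "V u \<in> carrier G" for u by (simp add: V_def)
  have Vc: "V u (n - 1) = 0" "V u n = u" "V u (n - 2) = 0" for u by (simp_all add: V_def)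
  have refl: "eqv a a" for a unfolding eqv_def by simp
  have sym: "eqv a b \<Longrightarrow> eqv b a" for a b unfolding eqv_def by simp
  have Gn: "(ELEM 0 b 0) n = 0" for b :: 'k by simp
  have F_add: "F u (b + b') = F u b + F u b'" for u b b'
  proof -
    define g1 where "g1 = ELEM 0 b 0"
    define g2 where "g2 = ELEM 0 b' 0"
    have c1: "g1 \<in> Uset n" "g2 \<in> Uset n" by (simp_all add: g1_def g2_def)
    define P where "P = g1 \<otimes>\<^bsub>G\<^esub> g2"
    have PC: "P \<in> Uset n" using c1 gr.m_closed by (simp add: P_def)
    have Pn: "P n = 0" "P (n - 1) = b + b'" "P (n - 2) = \<beta> b 0 b' 0"
      using mc[OF c1] by (simp_all add: P_def g1_def g2_def gamma_0)
    define C1 where "C1 = V u \<otimes>\<^bsub>G\<^esub> g1 \<otimes>\<^bsub>G\<^esub> inv\<^bsub>G\<^esub> (V u)"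
    define C2 where "C2 = V u \<otimes>\<^bsub>G\<^esub> g2 \<otimes>\<^bsub>G\<^esub> inv\<^bsub>G\<^esub> (V u)"
    have CC: "C1 \<in> Uset n" "C2 \<in> Uset n"
      using c1 gr.m_closed gr.inv_closed VC by (simp_all add: C1_def C2_def)
    have eq: "V u \<otimes>\<^bsub>G\<^esub> P \<otimes>\<^bsub>G\<^esub> inv\<^bsub>G\<^esub> (V u) = C1 \<otimes>\<^bsub>G\<^esub> C2"
      unfolding P_def C1_def C2_def using c1 by (intro gr.conj_mult) auto
    have "(V u \<otimes>\<^bsub>G\<^esub> P \<otimes>\<^bsub>G\<^esub> inv\<^bsub>G\<^esub> (V u)) (n - 2) = \<beta> b 0 b' 0 + F u (b + b')"
      using conjV[OF PC Pn(1), of u] Pn by (simp add: V_def F_def)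
    moreover have "(C1 \<otimes>\<^bsub>G\<^esub> C2) (n - 2) = F u b + F u b' + \<beta> b 0 b' 0"
      using mc(3)[OF CC] conjV[of g1 u] conjV[of g2 u] c1
      by (simp add: C1_def C2_def V_def F_def g1_def g2_def)
    ultimately show ?thesis using eq by (simp add: algebra_simps)
  qed
  have F_0: "F 0 b = 0" for b
  proof -
    have "V 0 = \<one>\<^bsub>G\<^esub>" by (simp add: V_def ELEM_0)
    hence "V 0 \<otimes>\<^bsub>G\<^esub> ELEM 0 b 0 \<otimes>\<^bsub>G\<^esub> inv\<^bsub>G\<^esub> (V 0) = ELEM 0 b 0"
      using gr.inv_one gr.l_one gr.r_one ELEM_carrier carrier_G by metis
    thus ?thesis using conjV(3)[of "ELEM 0 b 0" 0] by (simp add: V_def F_def)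
  qed
  have D_diag: "D b b = 0" for b
  proof -
    have gc: "ELEM 0 b 0 \<in> carrier G" by simp
    have "ELEM 0 b 0 \<otimes>\<^bsub>G\<^esub> ELEM 0 b 0 \<otimes>\<^bsub>G\<^esub> inv\<^bsub>G\<^esub> (ELEM 0 b 0) = ELEM 0 b 0"
      using gc by (simp add: gr.m_assoc gr.r_inv gr.r_one del: carrier_G one_G)
    thus ?thesis using conj_coords(3)[of "ELEM 0 b 0" "ELEM 0 b 0"] by (simp add: D_def)
  qed
  have F_nz: "F u b = 0 \<longleftrightarrow> b = 0" if u: "u \<noteq> 0" for u b
  proof -
    define g where "g = ELEM 0 b 0"
    have gC: "g \<in> Uset n" "g n = 0" by (simp_all add: g_def)
    have gGG: "g \<in> carrier G" using gC by simp
    have gU: "g \<in> Usub n (n - 1)" using gC by (intro Usub1_iff[THEN iffD2]) simp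
    have vV: "vlast n u = V u" by (simp add: V_def vlast_ELEM)
    have "(inv\<^bsub>G\<^esub> (V u \<otimes>\<^bsub>G\<^esub> g) \<otimes>\<^bsub>G\<^esub> (g \<otimes>\<^bsub>G\<^esub> V u) \<in> Usub n (n - 3)) \<longleftrightarrow> b = 0"
      using cent u gU ELEM_Usub2[of b] unfolding vV[symmetric] g_def by blast
    moreover have "(inv\<^bsub>G\<^esub> (V u \<otimes>\<^bsub>G\<^esub> g) \<otimes>\<^bsub>G\<^esub> (g \<otimes>\<^bsub>G\<^esub> V u) \<in> Usub n (n - 3)) \<longleftrightarrow> eqv (V u \<otimes>\<^bsub>G\<^esub> g) (g \<otimes>\<^bsub>G\<^esub> V u)"
      using gC gr.m_closed by (intro inv_mult_N_iff) auto
    moreover have "eqv (V u \<otimes>\<^bsub>G\<^esub> g) (g \<otimes>\<^bsub>G\<^esub> V u) \<longleftrightarrow> eqv (V u \<otimes>\<^bsub>G\<^esub> g \<otimes>\<^bsub>G\<^esub> inv\<^bsub>G\<^esub> (V u)) g"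
    proof
      assume e: "eqv (V u \<otimes>\<^bsub>G\<^esub> g) (g \<otimes>\<^bsub>G\<^esub> V u)"
      have "eqv (V u \<otimes>\<^bsub>G\<^esub> g \<otimes>\<^bsub>G\<^esub> inv\<^bsub>G\<^esub> (V u)) (g \<otimes>\<^bsub>G\<^esub> V u \<otimes>\<^bsub>G\<^esub> inv\<^bsub>G\<^esub> (V u))"
        using gC gr.m_closed gr.inv_closed e refl by (rule_tac eqv_cong) auto
      moreover have "g \<otimes>\<^bsub>G\<^esub> V u \<otimes>\<^bsub>G\<^esub> inv\<^bsub>G\<^esub> (V u) = g"
        using gGG VG[of u] by (simp add: gr.m_assoc gr.r_inv gr.r_one gr.inv_closed del: carrier_G one_G)
      ultimately show "eqv (V u \<otimes>\<^bsub>G\<^esub> g \<otimes>\<^bsub>G\<^esub> inv\<^bsub>G\<^esub> (V u)) g" by simp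
    next
      assume e: "eqv (V u \<otimes>\<^bsub>G\<^esub> g \<otimes>\<^bsub>G\<^esub> inv\<^bsub>G\<^esub> (V u)) g"
      have "eqv (V u \<otimes>\<^bsub>G\<^esub> g \<otimes>\<^bsub>G\<^esub> inv\<^bsub>G\<^esub> (V u) \<otimes>\<^bsub>G\<^esub> V u) (g \<otimes>\<^bsub>G\<^esub> V u)"
        using gC gr.m_closed gr.inv_closed e refl by (rule_tac eqv_cong) auto
      moreover have "V u \<otimes>\<^bsub>G\<^esub> g \<otimes>\<^bsub>G\<^esub> inv\<^bsub>G\<^esub> (V u) \<otimes>\<^bsub>G\<^esub> V u = V u \<otimes>\<^bsub>G\<^esub> g"
        using gGG VG[of u] by (simp add: gr.m_assoc gr.l_inv gr.r_one gr.inv_closed del: carrier_G one_G)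
      ultimately show "eqv (V u \<otimes>\<^bsub>G\<^esub> g) (g \<otimes>\<^bsub>G\<^esub> V u)" by simp
    qed
    moreover have "eqv (V u \<otimes>\<^bsub>G\<^esub> g \<otimes>\<^bsub>G\<^esub> inv\<^bsub>G\<^esub> (V u)) g \<longleftrightarrow> F u b = 0"
      using conjV[OF gC, of u] unfolding eqv_def by (simp add: V_def F_def g_def)
    ultimately show ?thesis by simp
  qed
  have FD: "F u b + F u' b = F (u + u') b + D (z u u') b" for u u' b
  proof -
    define g where "g = ELEM 0 b 0"
    have gC: "g \<in> Uset n" "g n = 0" by (simp_all add: g_def)
    define Z where "Z = inv\<^bsub>G\<^esub> (V (u + u')) \<otimes>\<^bsub>G\<^esub> (V u \<otimes>\<^bsub>G\<^esub> V u')"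
    have ZC: "Z \<in> Uset n" using gr.m_closed gr.inv_closed by (simp add: Z_def)
    have Zn: "Z n = 0"
    proof -
      have "V u \<otimes>\<^bsub>G\<^esub> V u' \<in> Uset n" using gr.m_closed by simp
      thus ?thesis using mc(1)[of "inv\<^bsub>G\<^esub> (V (u + u'))" "V u \<otimes>\<^bsub>G\<^esub> V u'"] mc(1)[of "V u" "V u'"]
        inv_coords(1)[of "V (u + u')"] gr.inv_closed by (simp add: Z_def Vc)
    qed
    have YZ: "V (u + u') \<otimes>\<^bsub>G\<^esub> Z = V u \<otimes>\<^bsub>G\<^esub> V u'"
      unfolding Z_def using VG gr.m_closed gr.inv_closed
      by (simp add: gr.m_assoc[symmetric] gr.r_inv gr.l_one del: carrier_G one_G)
    define C' where "C' = V u' \<otimes>\<^bsub>G\<^esub> g \<otimes>\<^bsub>G\<^esub> inv\<^bsub>G\<^esub> (V u')"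
    define C'' where "C'' = Z \<otimes>\<^bsub>G\<^esub> g \<otimes>\<^bsub>G\<^esub> inv\<^bsub>G\<^esub> Z"
    have C'C: "C' \<in> Uset n" "C'' \<in> Uset n"
      using gC ZC gr.m_closed gr.inv_closed by (simp_all add: C'_def C''_def)
    have c': "C' n = 0" "C' (n - 1) = b" "C' (n - 2) = F u' b"
      using conjV[OF gC, of u'] by (simp_all add: C'_def V_def F_def g_def)
    have c'': "C'' n = 0" "C'' (n - 1) = b" "C'' (n - 2) = D (z u u') b"
      using conj_coords[OF ZC gC] Zn by (simp_all add: C''_def D_def g_def z_def Z_def)
    have X1: "V u \<otimes>\<^bsub>G\<^esub> V u' \<otimes>\<^bsub>G\<^esub> g \<otimes>\<^bsub>G\<^esub> inv\<^bsub>G\<^esub> (V u \<otimes>\<^bsub>G\<^esub> V u') = V u \<otimes>\<^bsub>G\<^esub> C' \<otimes>\<^bsub>G\<^esub> inv\<^bsub>G\<^esub> (V u)"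
      unfolding C'_def using gC by (intro gr.conj_comp) auto
    have X2: "V u \<otimes>\<^bsub>G\<^esub> V u' \<otimes>\<^bsub>G\<^esub> g \<otimes>\<^bsub>G\<^esub> inv\<^bsub>G\<^esub> (V u \<otimes>\<^bsub>G\<^esub> V u') = V (u + u') \<otimes>\<^bsub>G\<^esub> C'' \<otimes>\<^bsub>G\<^esub> inv\<^bsub>G\<^esub> (V (u + u'))"
      unfolding C''_def YZ[symmetric] using gC ZC by (intro gr.conj_comp) auto
    have "(V u \<otimes>\<^bsub>G\<^esub> C' \<otimes>\<^bsub>G\<^esub> inv\<^bsub>G\<^esub> (V u)) (n - 2) = F u' b + F u b"
      using conjV[OF C'C(1) c'(1), of u] c' by (simp add: V_def F_def)
    moreover have "(V (u + u') \<otimes>\<^bsub>G\<^esub> C'' \<otimes>\<^bsub>G\<^esub> inv\<^bsub>G\<^esub> (V (u + u'))) (n - 2) = D (z u u') b + F (u + u') b"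
      using conjV[OF C'C(2) c''(1), of "u + u'"] c'' by (simp add: V_def F_def)
    ultimately show ?thesis using X1 X2 by (simp add: algebra_simps)
  qed
  have Fp: "F \<in> Pol2" using F_pol by (simp add: F_def[abs_def])
  have Dp: "D \<in> Pol2" using D_pol by (simp add: D_def[abs_def])
  obtain c h k where c: "c \<noteq> 0" and hk: "if CHAR('k) > 0 then (\<exists>a. h = CHAR('k) ^ a) \<and> (\<exists>b. k = CHAR('k) ^ b)
            else h = 1 \<and> k = 1" and Fc: "\<And>u b. F u b = c * u ^ h * b ^ k"
    using core[OF Fp Dp F_add F_nz F_0 FD D_diag] by blast
  have fin: "inv\<^bsub>G\<^esub> (g(n - 2 := g (n - 2) + c * u ^ h * g (n - 1) ^ k))
          \<otimes>\<^bsub>G\<^esub> (vlast n u \<otimes>\<^bsub>G\<^esub> g \<otimes>\<^bsub>G\<^esub> inv\<^bsub>G\<^esub> (vlast n u)) \<in> Usub n (n - 3)"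
    if g: "g \<in> Usub n (n - 1)" for u g
  proof -
    have gC: "g \<in> Uset n" "g n = 0" using g Usub1_iff by auto
    have g'C: "g(n - 2 := g (n - 2) + c * u ^ h * g (n - 1) ^ k) \<in> Uset n"
      using gC n3 by (auto simp: Uset_def)
    have CC: "vlast n u \<otimes>\<^bsub>G\<^esub> g \<otimes>\<^bsub>G\<^esub> inv\<^bsub>G\<^esub> (vlast n u) \<in> Uset n"
      using gC gr.m_closed gr.inv_closed by (simp add: vlast_ELEM)
    have ne: "n - Suc 0 \<noteq> n - 2" "n \<noteq> n - 2" using n3 by auto
    have "eqv (g(n - 2 := g (n - 2) + c * u ^ h * g (n - 1) ^ k)) (vlast n u \<otimes>\<^bsub>G\<^esub> g \<otimes>\<^bsub>G\<^esub> inv\<^bsub>G\<^esub> (vlast n u))"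
      using conjV[OF gC, of u] ne Fc[of u "g (n - 1)"] gC(2) unfolding eqv_def
      by (simp add: vlast_ELEM F_def)
    thus ?thesis using inv_mult_N_iff[OF g'C CC] by simp
  qed
  show ?thesis using c hk fin by blast
qed

end


theorem mainTheorem9:
  fixes n :: nat
    and \<psi> :: "nat \<Rightarrow> (nat \<Rightarrow> 'k::alg_closed_field) \<Rightarrow> (nat \<Rightarrow> 'k) \<Rightarrow> 'k"
    and e :: "nat \<Rightarrow> int"
    and \<phi> :: "nat \<Rightarrow> 'k \<Rightarrow> (nat \<Rightarrow> 'k) \<Rightarrow> 'k"
  assumes n3: "n \<ge> 3"
    and psi_poly: "\<forall>j. 1 \<le> j \<and> j < n \<longrightarrow>
        (\<exists>P \<in> poly_fun_on (Inl ` {j<..n} \<union> Inr ` {j<..n}).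
           \<forall>x y. \<psi> j x y = P (case_sum x y))"
    and grp: "group (Ugrp n \<psi>)"
    and normal_U: "\<forall>i \<le> n. Usub n i \<lhd> Ugrp n \<psi>"
    and phi_poly: "\<forall>j. 1 \<le> j \<and> j < n \<longrightarrow>
        (\<exists>P \<in> poly_fun_on (Inl ` {True, False} \<union> Inr ` {j<..n}).
           \<forall>\<tau> x. \<tau> \<noteq> 0 \<longrightarrow> \<phi> j \<tau> x = P (case_sum (\<lambda>b. if b then \<tau> else inverse \<tau>) x))"
    and act_aut: "\<forall>\<tau>. \<tau> \<noteq> 0 \<longrightarrow> Tact n e \<phi> \<tau> \<in> iso (Ugrp n \<psi>) (Ugrp n \<psi>)"
    and act_one: "\<forall>x \<in> Uset n. Tact n e \<phi> 1 x = x"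
    and act_mult: "\<forall>s t. s \<noteq> 0 \<longrightarrow> t \<noteq> 0 \<longrightarrow>
        (\<forall>x \<in> Uset n. Tact n e \<phi> (s * t) x = Tact n e \<phi> s (Tact n e \<phi> t x))"
    and act_normal: "\<forall>\<tau> i. \<tau> \<noteq> 0 \<longrightarrow> i \<le> n \<longrightarrow> Tact n e \<phi> \<tau> ` Usub n i \<subseteq> Usub n i"
    and centralizer: "\<forall>u::'k. u \<noteq> 0 \<longrightarrow> (\<forall>g \<in> Usub n (n - 1).
        (inv\<^bsub>Ugrp n \<psi>\<^esub> (vlast n u \<otimes>\<^bsub>Ugrp n \<psi>\<^esub> g) \<otimes>\<^bsub>Ugrp n \<psi>\<^esub> (g \<otimes>\<^bsub>Ugrp n \<psi>\<^esub> vlast n u)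
           \<in> Usub n (n - 3)) \<longleftrightarrow> g \<in> Usub n (n - 2))"
  shows "\<exists>c::'k. c \<noteq> 0 \<and> (\<exists>h k::nat.
     (if CHAR('k) > 0 then (\<exists>a. h = CHAR('k) ^ a) \<and> (\<exists>b. k = CHAR('k) ^ b) else h = 1 \<and> k = 1) \<and>
     (\<forall>u::'k. \<forall>g \<in> Usub n (n - 1).
        inv\<^bsub>Ugrp n \<psi>\<^esub> (g(n - 2 := g (n - 2) + c * u ^ h * g (n - 1) ^ k))
          \<otimes>\<^bsub>Ugrp n \<psi>\<^esub> (vlast n u \<otimes>\<^bsub>Ugrp n \<psi>\<^esub> g \<otimes>\<^bsub>Ugrp n \<psi>\<^esub> inv\<^bsub>Ugrp n \<psi>\<^esub> (vlast n u))
        \<in> Usub n (n - 3)))"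
  proof -
  interpret Uctx n \<psi> by (rule Uctx.intro[OF n3 psi_poly grp])
  show ?thesis using main[OF centralizer] by simp
qed

end
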